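(* Let $\rho$ be a two-qubit state on $\mathbb C^2_A\otimes\mathbb C^2_B$. Suppose there are a unit vector $\alpha\in\mathbb C^2_A$ and a nonzero vector $\beta\in\mathbb C^2_B$ with $\rho(\alpha\otimes\beta)=0$. Let $\alpha_\perp\in\mathbb C^2_A$ be a unit vector orthogonal to $\alpha$, and define the operator on $\mathbb C^2_B$ $$M_{\alpha,\alpha_\perp}=(\bra{\alpha}\otimes I_B)\,\rho\,(\ket{\alpha_\perp}\otimes I_B).$$ If $M_{\alpha,\alpha_\perp}\beta\neq0$, then $\rho$ is two-way projectively steerable.
   Context: For a bipartite state $\rho$ on $\mathcal H_X\otimes\mathcal H_Y$, the projective assemblage from $X$ to $Y$ consists of the unnormalized conditional states $\sigma_{a|M}=\operatorname{tr}_X[(\Pi_a\otimes I_Y)\rho]$ for all projective measurements $M=\{\Pi_a\}$ on $\mathcal H_X$. It admits a local hidden state (LHS) model if there exist a probability space $(\Lambda,\mu)$, density matrices $\tau_\lambda$ on $\mathcal H_Y$ (measurable in $\lambda$) and response functions $p(a|M,\lambda)\ge0$ with $\sum_a p(a|M,\lambda)=1$ such that $\sigma_{a|M}=\int_\Lambda p(a|M,\lambda)\tau_\lambda\,d\mu(\lambda)$ for all $M$ and $a$. The state is projectively steerable from $X$ to $Y$ if no such model exists. A two-qubit state is two-way projectively steerable if it is projectively steerable both from $A$ to $B$ and from $B$ to $A$. *)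

theory Defs
  imports "HOL-Probability.Probability" "Jordan_Normal_Form.Matrix"
begin

text \<open>Finite-dimensional operators/vectors are Jordan_Normal_Form complex matrices/vectors.
  The composite space C^dA (x) C^dB uses the basis ordering |i>|j> at index i*dB+j.\<close>

definition tensor_mat :: "complex mat \<Rightarrow> complex mat \<Rightarrow> complex mat" where
  "tensor_mat A B = mat (dim_row A * dim_row B) (dim_col A * dim_col B)
     (\<lambda>(i,j). A $$ (i div dim_row B, j div dim_col B) * B $$ (i mod dim_row B, j mod dim_col B))"

definition tensor_vec :: "complex vec \<Rightarrow> complex vec \<Rightarrow> complex vec" where
  "tensor_vec v w = vec (dim_vec v * dim_vec w) (\<lambda>i. v $ (i div dim_vec w) * w $ (i mod dim_vec w))"

definition ket :: "complex vec \<Rightarrow> complex mat" where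
  "ket v = mat (dim_vec v) 1 (\<lambda>(i,j). v $ i)"

definition bra :: "complex vec \<Rightarrow> complex mat" where
  "bra v = mat 1 (dim_vec v) (\<lambda>(i,j). cnj (v $ j))"

definition ptrace_fst :: "nat \<Rightarrow> nat \<Rightarrow> complex mat \<Rightarrow> complex mat" where
  "ptrace_fst dA dB X = mat dB dB (\<lambda>(j,k). \<Sum>i<dA. X $$ (i*dB + j, i*dB + k))"

definition ptrace_snd :: "nat \<Rightarrow> nat \<Rightarrow> complex mat \<Rightarrow> complex mat" where
  "ptrace_snd dA dB X = mat dA dA (\<lambda>(i,k). \<Sum>j<dB. X $$ (i*dB + j, k*dB + j))"

definition mat_trace :: "complex mat \<Rightarrow> complex" where
  "mat_trace A = (\<Sum>i<dim_row A. A $$ (i,i))"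

definition hermitian_mat :: "nat \<Rightarrow> complex mat \<Rightarrow> bool" where
  "hermitian_mat n A \<longleftrightarrow> A \<in> carrier_mat n n \<and> (\<forall>i<n. \<forall>j<n. A $$ (i,j) = cnj (A $$ (j,i)))"

definition psd_mat :: "nat \<Rightarrow> complex mat \<Rightarrow> bool" where
  "psd_mat n A \<longleftrightarrow> hermitian_mat n A \<and> (\<forall>v\<in>carrier_vec n. Re (v \<bullet>c (A *\<^sub>v v)) \<ge> 0)"

definition density_mat :: "nat \<Rightarrow> complex mat \<Rightarrow> bool" where
  "density_mat n A \<longleftrightarrow> psd_mat n A \<and> mat_trace A = 1"

definition proj_meas :: "nat \<Rightarrow> complex mat list \<Rightarrow> bool" where
  "proj_meas d M \<longleftrightarrow>
     (\<forall>a<length M. hermitian_mat d (M ! a) \<and> M ! a * M ! a = M ! a) \<and>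
     (\<forall>i<d. \<forall>j<d. (\<Sum>a<length M. (M ! a) $$ (i,j)) = (if i = j then 1 else 0))"

definition assemblage_AB :: "complex mat \<Rightarrow> complex mat list \<Rightarrow> nat \<Rightarrow> complex mat" where
  "assemblage_AB \<rho> M a = ptrace_fst 2 2 (tensor_mat (M ! a) (1\<^sub>m 2) * \<rho>)"

definition assemblage_BA :: "complex mat \<Rightarrow> complex mat list \<Rightarrow> nat \<Rightarrow> complex mat" where
  "assemblage_BA \<rho> M a = ptrace_snd 2 2 (tensor_mat (1\<^sub>m 2) (M ! a) * \<rho>)"

definition LHS_model :: "nat \<Rightarrow> nat \<Rightarrow> (complex mat list \<Rightarrow> nat \<Rightarrow> complex mat) \<Rightarrow>
    'l measure \<Rightarrow> ('l \<Rightarrow> complex mat) \<Rightarrow> (complex mat list \<Rightarrow> nat \<Rightarrow> 'l \<Rightarrow> real) \<Rightarrow> bool" where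
  "LHS_model dX dY \<sigma> \<mu> \<tau> p \<longleftrightarrow>
     prob_space \<mu> \<and>
     (\<forall>l\<in>space \<mu>. density_mat dY (\<tau> l)) \<and>
     (\<forall>i<dY. \<forall>j<dY. (\<lambda>l. \<tau> l $$ (i,j)) \<in> borel_measurable \<mu>) \<and>
     (\<forall>M. proj_meas dX M \<longrightarrow>
        (\<forall>l\<in>space \<mu>. (\<forall>a<length M. p M a l \<ge> 0) \<and> (\<Sum>a<length M. p M a l) = 1) \<and>
        (\<forall>a<length M. \<forall>i<dY. \<forall>j<dY.
           integrable \<mu> (\<lambda>l. complex_of_real (p M a l) * \<tau> l $$ (i,j)) \<and>
           \<sigma> M a $$ (i,j) = (\<integral>l. complex_of_real (p M a l) * \<tau> l $$ (i,j) \<partial>\<mu>)))"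

text \<open>Projective steerability: no LHS model over any probability space on the type 'l
  (the theorem quantifies over all types 'l).\<close>
definition proj_steerable_AB :: "'l itself \<Rightarrow> complex mat \<Rightarrow> bool" where
  "proj_steerable_AB _ \<rho> \<longleftrightarrow>
     \<not> (\<exists>(\<mu>::'l measure) \<tau> p. LHS_model 2 2 (assemblage_AB \<rho>) \<mu> \<tau> p)"

definition proj_steerable_BA :: "'l itself \<Rightarrow> complex mat \<Rightarrow> bool" where
  "proj_steerable_BA _ \<rho> \<longleftrightarrow>
     \<not> (\<exists>(\<mu>::'l measure) \<tau> p. LHS_model 2 2 (assemblage_BA \<rho>) \<mu> \<tau> p)"

definition two_way_proj_steerable :: "'l itself \<Rightarrow> complex mat \<Rightarrow> bool" where
  "two_way_proj_steerable L \<rho> \<longleftrightarrow> proj_steerable_AB L \<rho> \<and> proj_steerable_BA L \<rho>"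

end

theory Submission
  imports Defs
begin

definition bilN :: "nat \<Rightarrow> (nat \<Rightarrow> complex) \<Rightarrow> complex mat \<Rightarrow> (nat \<Rightarrow> complex) \<Rightarrow> complex" where
  "bilN n f R g = (\<Sum>a<n. \<Sum>b<n. cnj (f a) * R $$ (a,b) * g b)"

definition tf :: "(nat \<Rightarrow> complex) \<Rightarrow> (nat \<Rightarrow> complex) \<Rightarrow> nat \<Rightarrow> complex" where
  "tf f g a = f (a div 2) * g (a mod 2)"

definition proj1 :: "(nat \<Rightarrow> complex) \<Rightarrow> complex mat" where
  "proj1 u = mat 2 2 (\<lambda>(i,j). u i * cnj (u j))"

lemma sum2: "(\<Sum>i<(2::nat). f i) = f 0 + f 1" by (simp add: eval_nat_numeral)
lemma sum4: "(\<Sum>i<(4::nat). f i) = f 0 + f 1 + f 2 + f 3" by (simp add: eval_nat_numeral)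
lemma sum2': "(\<Sum>i\<in>{0..<(2::nat)}. f i) = f 0 + f 1" by (simp add: eval_nat_numeral)
lemma sum4': "(\<Sum>i\<in>{0..<(4::nat)}. f i) = f 0 + f 1 + f 2 + f 3" by (simp add: eval_nat_numeral)

lemma ptrace_AB_bil:
  assumes "\<rho> \<in> carrier_mat 4 4"
  shows "bilN 2 y (ptrace_fst 2 2 (tensor_mat (proj1 u) (1\<^sub>m 2) * \<rho>)) x = bilN 4 (tf u y) \<rho> (tf u x)"
  using assms
  apply (simp add: bilN_def tf_def ptrace_fst_def tensor_mat_def proj1_def sum2 sum4 sum2' sum4' scalar_prod_def
     index_mult_mat algebra_simps)
  apply (simp add: numeral_2_eq_2 numeral_3_eq_3 algebra_simps)
  done

lemma bil_herm:
  assumes "hermitian_mat 2 A"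
  shows "bilN 2 f A g = cnj (bilN 2 g A f)"
proof -
  have h: "\<And>i j. i < 2 \<Longrightarrow> j < 2 \<Longrightarrow> A $$ (i,j) = cnj (A $$ (j,i))" using assms unfolding hermitian_mat_def by blast
  have c: "cnj (A $$ (Suc 0,0)) = A $$ (0,Suc 0)" "cnj (A $$ (0,Suc 0)) = A $$ (Suc 0,0)"
    "cnj (A $$ (0,0)) = A $$ (0,0)" "cnj (A $$ (Suc 0,Suc 0)) = A $$ (Suc 0,Suc 0)"
    using h[of 0 1] h[of 1 0] h[of 0 0] h[of 1 1] by (auto simp del: complex_cnj_cnj)
  show ?thesis unfolding bilN_def sum2 by (simp add: c algebra_simps)
qed

lemma psd_bil:
  assumes "psd_mat 2 A"
  shows "Re (bilN 2 f A f) \<ge> 0"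
proof -
  have A: "A \<in> carrier_mat 2 2" using assms unfolding psd_mat_def hermitian_mat_def by blast
  have "vec 2 f \<in> carrier_vec 2" by simp
  then have "Re (vec 2 f \<bullet>c (A *\<^sub>v vec 2 f)) \<ge> 0" using assms by (simp add: psd_mat_def)
  moreover have "vec 2 f \<bullet>c (A *\<^sub>v vec 2 f) = cnj (bilN 2 f A f)"
    using A by (simp add: bilN_def sum2 sum2' scalar_prod_def mult_mat_vec_def algebra_simps)
  ultimately show ?thesis by simp
qed

lemma cs_real:
  fixes Qx Qy :: real and w :: complex
  assumes all: "\<And>z. 0 \<le> Qx + 2 * Re (cnj z * w) + (cmod z)^2 * Qy"
    and Qx: "Qx \<ge> 0" and Qy: "Qy \<ge> 0"
  shows "(cmod w)^2 \<le> Qx * Qy"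
proof (cases "Qy > 0")
  case True
  have a: "0 \<le> Qx + 2 * Re (cnj (- w / Qy) * w) + (cmod (- w / Qy))^2 * Qy" by (rule all)
  have wc: "cnj w * w = of_real ((cmod w)^2)" by (metis complex_norm_square mult.commute of_real_power)
  have "cnj (- w / Qy) * w = - (cnj w * w) / of_real Qy" by simp
  also have "\<dots> = - of_real ((cmod w)^2 / Qy)" using wc by simp
  finally have "Re (cnj (- w / Qy) * w) = Re (- of_real ((cmod w)^2 / Qy))" by (simp only:)
  then have e1: "Re (cnj (- w / Qy) * w) = - ((cmod w)^2 / Qy)" by simp
  have e2: "(cmod (- w / Qy))^2 * Qy = (cmod w)^2 / Qy"
    using True by (simp add: norm_divide power2_eq_square field_simps)
  have "0 \<le> Qx - (cmod w)^2 / Qy" using a e1 e2 by linarith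
  then have "(cmod w)^2 / Qy \<le> Qx" by linarith
  then show ?thesis using True by (simp add: pos_divide_le_eq mult.commute)
next
  case False
  then have Qy0: "Qy = 0" using Qy by simp
  show ?thesis
  proof (cases "w = 0")
    case True then show ?thesis using Qx Qy by simp
  next
    case False
    define t where "t = (Qx + 1) / (2 * (cmod w)^2)"
    have a: "0 \<le> Qx + 2 * Re (cnj (- of_real t * w) * w) + (cmod (- of_real t * w))^2 * Qy" by (rule all)
    have wc: "cnj w * w = of_real ((cmod w)^2)" by (metis complex_norm_square mult.commute of_real_power)
    have "cnj (- of_real t * w) * w = - of_real t * (cnj w * w)" by simp
    also have "\<dots> = - of_real (t * (cmod w)^2)" using wc by simp
    finally have "Re (cnj (- of_real t * w) * w) = Re (- of_real (t * (cmod w)^2))" by (simp only:)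
    then have e1: "Re (cnj (- of_real t * w) * w) = - (t * (cmod w)^2)" by simp
    have "0 \<le> Qx - 2 * (t * (cmod w)^2)" using a e1 Qy0 by simp
    moreover have "2 * (t * (cmod w)^2) = Qx + 1" using False by (simp add: t_def)
    ultimately show ?thesis by simp
  qed
qed

lemma psd_cs:
  assumes "psd_mat 2 A"
  shows "(cmod (bilN 2 y A x))^2 \<le> Re (bilN 2 x A x) * Re (bilN 2 y A y)"
proof (rule cs_real)
  have herm: "hermitian_mat 2 A" using assms by (simp add: psd_mat_def)
  fix z :: complex
  have "Re (bilN 2 (\<lambda>i. x i + z * y i) A (\<lambda>i. x i + z * y i)) \<ge> 0" by (rule psd_bil[OF assms])
  moreover have "bilN 2 (\<lambda>i. x i + z * y i) A (\<lambda>i. x i + z * y i) =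
     bilN 2 x A x + z * bilN 2 x A y + cnj z * bilN 2 y A x + z * cnj z * bilN 2 y A y"
    by (simp add: bilN_def sum2 algebra_simps)
  moreover have "bilN 2 x A y = cnj (bilN 2 y A x)" by (rule bil_herm[OF herm])
  moreover have "Re (z * cnj z * bilN 2 y A y) = (cmod z)^2 * Re (bilN 2 y A y)"
    by (simp add: complex_norm_square[symmetric])
  moreover have "Re (z * cnj (bilN 2 y A x)) = Re (cnj z * bilN 2 y A x)"
    by simp
  ultimately show "0 \<le> Re (bilN 2 x A x) + 2 * Re (cnj z * bilN 2 y A x) + (cmod z)^2 * Re (bilN 2 y A y)"
    by (simp add: cmod_power2 power2_eq_square algebra_simps)
next
  show "Re (bilN 2 x A x) \<ge> 0" "Re (bilN 2 y A y) \<ge> 0" using psd_bil[OF assms] by auto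
qed

lemma density_entry_bound:
  assumes "density_mat 2 A" "i < 2" "j < 2"
  shows "cmod (A $$ (i,j)) \<le> 1"
proof -
  have psd: "psd_mat 2 A" and tr: "mat_trace A = 1" using assms by (auto simp: density_mat_def)
  have herm: "hermitian_mat 2 A" using psd by (simp add: psd_mat_def)
  have hh: "A \<in> carrier_mat 2 2" "\<And>i j. i < 2 \<Longrightarrow> j < 2 \<Longrightarrow> A $$ (i,j) = cnj (A $$ (j,i))"
    using herm unfolding hermitian_mat_def by blast+
  have dim: "dim_row A = 2" using hh(1) by blast
  define e where "e k = (\<lambda>i::nat. if i = k then (1::complex) else 0)" for k
  have bee: "bilN 2 (e a) A (e b) = A $$ (a,b)" if "a < 2" "b < 2" for a b
    using that unfolding bilN_def sum2 e_def by (cases a; cases b) (auto simp: numeral_2_eq_2 less_Suc_eq)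
  have d0: "Re (A $$ (0,0)) \<ge> 0" using psd_bil[OF psd, of "e 0"] bee[of 0 0] by simp
  have d1: "Re (A $$ (1,1)) \<ge> 0" using psd_bil[OF psd, of "e 1"] bee[of 1 1] by simp
  have r0: "A $$ (0,0) = cnj (A $$ (0,0))" by (rule hh(2)) auto
  have r1: "A $$ (1,1) = cnj (A $$ (1,1))" by (rule hh(2)) auto
  have o: "A $$ (0,1) = cnj (A $$ (1,0))" by (rule hh(2)) auto
  have i0: "Im (A $$ (0,0)) = 0" using arg_cong[OF r0, of Im] by simp
  have i1: "Im (A $$ (1,1)) = 0" using arg_cong[OF r1, of Im] by simp
  have tr1: "A $$ (0,0) + A $$ (1,1) = 1" using tr dim by (simp add: mat_trace_def sum2)
  have sre: "Re (A $$ (0,0)) + Re (A $$ (1,1)) = 1" using arg_cong[OF tr1, of Re] by simp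
  have c00: "cmod (A $$ (0,0)) = Re (A $$ (0,0))" using i0 d0 by (simp add: cmod_def)
  have c11: "cmod (A $$ (1,1)) = Re (A $$ (1,1))" using i1 d1 by (simp add: cmod_def)
  have "(cmod (bilN 2 (e 1) A (e 0)))^2 \<le> Re (bilN 2 (e 0) A (e 0)) * Re (bilN 2 (e 1) A (e 1))"
    by (rule psd_cs[OF psd])
  then have cs: "(cmod (A $$ (1,0)))^2 \<le> Re (A $$ (0,0)) * Re (A $$ (1,1))" using bee by simp
  have "Re (A $$ (0,0)) * Re (A $$ (1,1)) \<le> 1 * 1" using d0 d1 sre by (intro mult_mono) auto
  with cs have "(cmod (A $$ (1,0)))^2 \<le> 1" by simp
  then have c10: "cmod (A $$ (1,0)) \<le> 1" by (simp add: power_le_one_iff abs_le_iff)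
  then have c01: "cmod (A $$ (0,1)) \<le> 1" using o by simp
  have "i = 0 \<or> i = 1" "j = 0 \<or> j = 1" using assms by auto
  then show ?thesis using c00 c11 d0 d1 sre c10 c01 by auto
qed

lemma density_Q_bound:
  assumes "density_mat 2 A"
  shows "Re (bilN 2 y A y) \<le> (cmod (y 0) + cmod (y 1))^2"
proof -
  have b: "\<And>i j. i < 2 \<Longrightarrow> j < 2 \<Longrightarrow> cmod (A $$ (i,j)) \<le> 1" using density_entry_bound[OF assms] by auto
  have t: "cmod (cnj (y i) * A $$ (i,j) * y j) \<le> cmod (y i) * cmod (y j)" if "i < 2" "j < 2" for i j
  proof -
    have "cmod (cnj (y i) * A $$ (i,j) * y j) = cmod (y i) * cmod (A $$ (i,j)) * cmod (y j)" by (simp add: norm_mult)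
    also have "\<dots> \<le> cmod (y i) * 1 * cmod (y j)" using b[OF that] by (intro mult_right_mono mult_left_mono) auto
    finally show ?thesis by simp
  qed
  have "Re (bilN 2 y A y) \<le> cmod (bilN 2 y A y)" by (rule complex_Re_le_cmod)
  also have "\<dots> \<le> (\<Sum>a<2. \<Sum>b<2. cmod (cnj (y a) * A $$ (a,b) * y b))"
    unfolding bilN_def by (rule order_trans[OF norm_sum sum_mono]) (rule norm_sum)
  also have "\<dots> \<le> (\<Sum>a<2. \<Sum>b<2. cmod (y a) * cmod (y b))"
    by (intro sum_mono) (use t in auto)
  also have "\<dots> = (cmod (y 0) + cmod (y 1))^2" by (simp add: sum2 power2_eq_square algebra_simps)
  finally show ?thesis .
qed

lemma bil_lin_right:
  "bilN n f R (\<lambda>b. c * g1 b + d * g2 b) = c * bilN n f R g1 + d * bilN n f R g2"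
  unfolding bilN_def by (simp add: sum_distrib_left sum.distrib algebra_simps)

lemma bil_lin_left:
  "bilN n (\<lambda>a. c * f1 a + d * f2 a) R g = cnj c * bilN n f1 R g + cnj d * bilN n f2 R g"
  unfolding bilN_def by (simp add: sum_distrib_left sum.distrib algebra_simps)

lemma bil_scale_left: "bilN n (\<lambda>a. c * f a) R g = cnj c * bilN n f R g"
  unfolding bilN_def by (simp add: sum_distrib_left algebra_simps)

lemma bil_kernel:
  assumes "\<And>a. a < n \<Longrightarrow> (\<Sum>b<n. R $$ (a,b) * g b) = 0"
  shows "bilN n f R g = 0"
proof -
  have "bilN n f R g = (\<Sum>a<n. cnj (f a) * (\<Sum>b<n. R $$ (a,b) * g b))"
    unfolding bilN_def by (simp add: sum_distrib_left algebra_simps)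
  also have "\<dots> = 0" using assms by simp
  finally show ?thesis .
qed

lemma bil4_herm:
  assumes "hermitian_mat 4 A"
  shows "bilN 4 f A g = cnj (bilN 4 g A f)"
proof -
  have h0: "\<And>i j. i < 4 \<Longrightarrow> j < 4 \<Longrightarrow> A $$ (i,j) = cnj (A $$ (j,i))" using assms unfolding hermitian_mat_def by blast
  have h: "\<And>i j. i < 4 \<Longrightarrow> j < 4 \<Longrightarrow> cnj (A $$ (j,i)) = A $$ (i,j)" using h0 by (metis complex_cnj_cnj)
  have "cnj (bilN 4 g A f) = (\<Sum>a<4. \<Sum>b<4. g a * cnj (A $$ (a,b)) * cnj (f b))"
    unfolding bilN_def by simp
  also have "\<dots> = (\<Sum>a<4. \<Sum>b<4. cnj (f b) * A $$ (b,a) * g a)"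
    by (intro sum.cong refl) (simp add: h)
  also have "\<dots> = (\<Sum>b<4. \<Sum>a<4. cnj (f b) * A $$ (b,a) * g a)" by (rule sum.swap)
  also have "\<dots> = bilN 4 f A g" unfolding bilN_def by simp
  finally show ?thesis by simp
qed

lemma tf_lin1: "tf (\<lambda>i. c * f1 i + d * f2 i) g = (\<lambda>a. c * tf f1 g a + d * tf f2 g a)"
  by (simp add: tf_def fun_eq_iff algebra_simps)

lemma tf_lin2: "tf f (\<lambda>i. c * g1 i + d * g2 i) = (\<lambda>a. c * tf f g1 a + d * tf f g2 a)"
  by (simp add: tf_def fun_eq_iff algebra_simps)

lemma tf_scale2: "tf f (\<lambda>i. c * g i) = (\<lambda>a. c * tf f g a)"
  by (simp add: tf_def fun_eq_iff algebra_simps)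

lemma ptrace_BA_bil:
  assumes "\<rho> \<in> carrier_mat 4 4"
  shows "bilN 2 y (ptrace_snd 2 2 (tensor_mat (1\<^sub>m 2) (proj1 u) * \<rho>)) x = bilN 4 (tf y u) \<rho> (tf x u)"
  using assms
  apply (simp add: bilN_def tf_def ptrace_snd_def tensor_mat_def proj1_def sum2 sum4 sum2' sum4' scalar_prod_def
     index_mult_mat algebra_simps)
  apply (simp add: numeral_2_eq_2 numeral_3_eq_3 algebra_simps)
  done

lemma meas_small:
  fixes \<mu> :: "'l measure" and T :: "'l \<Rightarrow> real"
  assumes ps: "prob_space \<mu>" and Tm: "T \<in> borel_measurable \<mu>" and e: "e > 0"
  shows "\<exists>n. measure \<mu> {l\<in>space \<mu>. 0 < T l \<and> T l < 1/(real n+1)} < e"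
proof -
  interpret prob_space \<mu> by (rule ps)
  define S where "S n = {l\<in>space \<mu>. 0 < T l \<and> T l < 1/(real n+1)}" for n
  have "S n \<in> sets \<mu>" for n unfolding S_def using Tm by measurable
  then have Ssets: "range S \<subseteq> sets \<mu>" by auto
  have dec: "decseq S"
  proof (rule decseq_SucI)
    fix n
    have "1/(real (Suc n)+1) \<le> 1/(real n+1)" by (simp add: frac_le)
    then show "S (Suc n) \<subseteq> S n" unfolding S_def by force
  qed
  have empty: "(\<Inter>i. S i) = {}"
  proof (rule ccontr)
    assume "(\<Inter>i. S i) \<noteq> {}"
    then obtain l where l: "\<And>i. l \<in> S i" by blast
    then have pos: "0 < T l" unfolding S_def by blast
    obtain n where n: "1 / T l < real n" using reals_Archimedean2 by blast
    have "1/(real n+1) < T l"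
    proof -
      have "1 < T l * real n" using n pos by (simp add: field_simps)
      then have "1 < T l * (real n + 1)" using pos by (simp add: algebra_simps)
      then show ?thesis using pos by (simp add: field_simps)
    qed
    with l[of n] show False unfolding S_def by auto
  qed
  have "(\<lambda>n. measure \<mu> (S n)) \<longlonglongrightarrow> measure \<mu> (\<Inter>i. S i)"
    by (rule finite_Lim_measure_decseq[OF Ssets dec])
  then have "(\<lambda>n. measure \<mu> (S n)) \<longlonglongrightarrow> 0" using empty by simp
  then have "eventually (\<lambda>n. measure \<mu> (S n) < e) sequentially"
    using e by (rule order_tendstoD(2))
  then obtain N where "\<And>n. n \<ge> N \<Longrightarrow> measure \<mu> (S n) < e"
    unfolding eventually_sequentially by blast
  then show ?thesis unfolding S_def by blast
qed

lemma sqrt_bound: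
  fixes P T a d :: real
  assumes P: "0 \<le> P" "P \<le> 1" and T: "0 \<le> T" and a: "a > 0" and d: "d > 0"
  shows "P * sqrt T \<le> P * T / sqrt d + P * T / (2*a) + a/2 * indicator {t. 0 < t \<and> t < d} T"
proof (cases "T \<ge> d")
  case True
  have "sqrt d \<le> sqrt T" using True by simp
  then have "sqrt T * sqrt d \<le> sqrt T * sqrt T" by (rule mult_left_mono) (use T in simp)
  moreover have "sqrt T * sqrt T = T" using T by simp
  ultimately have "sqrt T * sqrt d \<le> T" by linarith
  then have "sqrt T \<le> T / sqrt d" using d by (simp add: field_simps)
  then have "P * sqrt T \<le> P * T / sqrt d" using P by (metis mult_left_mono times_divide_eq_right)
  moreover have "0 \<le> P * T / (2*a)" using P T a by simp
  moreover have "0 \<le> a/2 * indicator {t. 0 < t \<and> t < d} T" using a by simp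
  ultimately show ?thesis by linarith
next
  case False
  show ?thesis
  proof (cases "T = 0")
    case True then show ?thesis using a by simp
  next
    case F: False
    have ind: "indicator {t. 0 < t \<and> t < d} T = (1::real)" using F False T by (simp add: indicator_def)
    have "0 \<le> (sqrt T - a)^2" by simp
    then have "2 * a * sqrt T \<le> T + a^2" using T by (simp add: power2_eq_square algebra_simps)
    then have st: "sqrt T \<le> T/(2*a) + a/2" using a by (simp add: field_simps power2_eq_square)
    have "P * sqrt T \<le> P * (T/(2*a) + a/2)" using st P by (simp add: mult_left_mono)
    also have "\<dots> = P*T/(2*a) + P*(a/2)" by (simp add: algebra_simps)
    also have "\<dots> \<le> P*T/(2*a) + a/2" using P a by (simp add: mult_left_le_one_le)
    finally have "P * sqrt T \<le> P*T/(2*a) + a/2" .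
    moreover have "0 \<le> P * T / sqrt d" using P T d by simp
    ultimately show ?thesis using ind by simp
  qed
qed

lemma core:
  fixes \<mu> :: "'l measure" and T :: "'l \<Rightarrow> real" and W :: "'l \<Rightarrow> complex"
  assumes ps: "prob_space \<mu>" and Tm: "T \<in> borel_measurable \<mu>"
    and TW: "\<And>l. l \<in> space \<mu> \<Longrightarrow> T l \<ge> 0 \<and> (cmod (W l))^2 \<le> B * T l"
    and B: "B > 0" and K: "K > 0"
    and meas: "\<And>s. 0 < s \<Longrightarrow> s < 1 \<Longrightarrow> \<exists>P. (\<forall>l\<in>space \<mu>. 0 \<le> P l \<and> P l \<le> 1)
        \<and> integrable \<mu> (\<lambda>l. P l * T l) \<and> integrable \<mu> (\<lambda>l. complex_of_real (P l) * W l)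
        \<and> (\<integral>l. P l * T l \<partial>\<mu>) = s^2 * C
        \<and> cmod (\<integral>l. complex_of_real (P l) * W l \<partial>\<mu>) \<ge> s * K - s^2 * L"
  shows False
proof -
  interpret prob_space \<mu> by (rule ps)
  have C: "C \<ge> 0"
  proof -
    obtain P where P: "\<forall>l\<in>space \<mu>. 0 \<le> P l \<and> P l \<le> 1" "(\<integral>l. P l * T l \<partial>\<mu>) = (1/2)^2 * C"
      using meas[of "1/2"] by auto
    have "0 \<le> (\<integral>l. P l * T l \<partial>\<mu>)" using P(1) TW by (intro Bochner_Integration.integral_nonneg) auto
    then show ?thesis using P(2) by (simp add: zero_le_mult_iff)
  qed
  define rB where "rB = sqrt B"
  have rB: "rB > 0" using B by (simp add: rB_def)
  define K1 where "K1 = K / rB"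
  have K1: "K1 > 0" using K rB by (simp add: K1_def)
  define \<eta> where "\<eta> = 2*C/K1 + 1"
  have "0 \<le> 2*C/K1" using C K1 by simp
  then have \<eta>: "\<eta> > 0" by (simp add: \<eta>_def)
  have eta2: "rB * (C/(2*\<eta>)) < K/4"
  proof -
    have "2*C < \<eta> * K1" using K1 C by (simp add: \<eta>_def field_simps)
    then have "C/(2*\<eta>) < K1/4" using \<eta> by (simp add: field_simps)
    then show ?thesis using rB by (simp add: K1_def field_simps)
  qed
  obtain n where n: "measure \<mu> {l\<in>space \<mu>. 0 < T l \<and> T l < 1/(real n+1)} < K1/(4*\<eta>)"
    using meas_small[OF ps Tm, of "K1/(4*\<eta>)"] K1 \<eta> by auto
  define \<delta> where "\<delta> = 1/(real n+1)"
  have \<delta>: "\<delta> > 0" by (simp add: \<delta>_def)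
  define S where "S = {l\<in>space \<mu>. 0 < T l \<and> T l < \<delta>}"
  define m where "m = measure \<mu> S"
  have m: "m < K1/(4*\<eta>)" "m \<ge> 0" using n by (simp_all add: m_def S_def \<delta>_def)
  have Ssets: "S \<in> sets \<mu>" unfolding S_def using Tm by measurable
  define rd where "rd = sqrt \<delta>"
  have rd: "rd > 0" using \<delta> by (simp add: rd_def)
  define L1 where "L1 = \<bar>L\<bar> / rB"
  have L1: "L1 \<ge> 0" using rB by (simp add: L1_def)
  define s where "s = min (1/2) (K1/(4*(L1 + C/rd + 1)))"
  have den: "L1 + C/rd + 1 > 0" using L1 C rd by (simp add: add_nonneg_pos)
  have s: "0 < s" "s < 1" using K1 den by (auto simp: s_def)
  have s2: "s * (L1 + C/rd) \<le> K1/4"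
  proof -
    have "s \<le> K1/(4*(L1 + C/rd + 1))" by (simp add: s_def)
    moreover have "4*(L1 + C/rd + 1) > 0" using den by simp
    ultimately have "s * (4*(L1 + C/rd + 1)) \<le> K1" using pos_le_divide_eq by blast
    then have "4 * (s * (L1 + C/rd)) + 4 * s \<le> K1" by (simp add: algebra_simps)
    then show ?thesis using s by linarith
  qed
  obtain P where P: "\<forall>l\<in>space \<mu>. 0 \<le> P l \<and> P l \<le> 1" "integrable \<mu> (\<lambda>l. P l * T l)"
     "integrable \<mu> (\<lambda>l. complex_of_real (P l) * W l)" "(\<integral>l. P l * T l \<partial>\<mu>) = s^2 * C"
     "cmod (\<integral>l. complex_of_real (P l) * W l \<partial>\<mu>) \<ge> s * K - s^2 * L"
    using meas[OF s] by blast
  define a where "a = s * \<eta>"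
  have a: "a > 0" using s \<eta> by (simp add: a_def)
  define G where "G l = rB * (P l * T l / rd + P l * T l / (2*a) + a/2 * indicator S l)" for l
  have fin: "emeasure \<mu> S < \<infinity>" by (simp add: less_top[symmetric])
  have i1: "integrable \<mu> (\<lambda>l. P l * T l / rd)" using P(2) by simp
  have i2: "integrable \<mu> (\<lambda>l. P l * T l / (2*a))" using P(2) by simp
  have i3: "integrable \<mu> (\<lambda>l. a/2 * indicator S l)"
    using integrable_real_indicator[OF Ssets fin] by simp
  have Gi: "integrable \<mu> G"
    unfolding G_def using i1 i2 i3 integrable_real_indicator[OF Ssets fin] by (intro integrable_mult_right Bochner_Integration.integrable_add)
  have GI: "integral\<^sup>L \<mu> G = rB * (s^2*C/rd + s^2*C/(2*a) + a/2 * m)"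
  proof -
    have "integral\<^sup>L \<mu> G = rB * ((\<integral>l. P l * T l / rd \<partial>\<mu>) + (\<integral>l. P l * T l / (2*a) \<partial>\<mu>) + (\<integral>l. a/2 * indicator S l \<partial>\<mu>))"
      unfolding G_def using i1 i2 i3 by (simp add: Bochner_Integration.integral_add)
    also have "\<dots> = rB * ((\<integral>l. P l * T l \<partial>\<mu>)/rd + (\<integral>l. P l * T l \<partial>\<mu>)/(2*a) + a/2 * measure \<mu> S)"
      using Ssets by (simp add: Int_absorb2 sets.sets_into_space)
    finally have "integral\<^sup>L \<mu> G = rB * ((\<integral>l. P l * T l \<partial>\<mu>)/rd + (\<integral>l. P l * T l \<partial>\<mu>)/(2*a) + a/2 * measure \<mu> S)" .
    then show ?thesis using P(4) by (simp add: m_def)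
  qed
  have pw: "cmod (complex_of_real (P l) * W l) \<le> G l" if l: "l \<in> space \<mu>" for l
  proof -
    have Pl: "0 \<le> P l" "P l \<le> 1" using P(1) l by auto
    have Tl: "T l \<ge> 0" "(cmod (W l))^2 \<le> B * T l" using TW l by auto
    have "cmod (W l) \<le> sqrt (B * T l)" using Tl by (simp add: real_le_rsqrt)
    also have "\<dots> = rB * sqrt (T l)" by (simp add: rB_def real_sqrt_mult)
    finally have w: "cmod (W l) \<le> rB * sqrt (T l)" .
    have "cmod (complex_of_real (P l) * W l) = P l * cmod (W l)" using Pl by (simp add: norm_mult)
    also have "\<dots> \<le> P l * (rB * sqrt (T l))" using w Pl by (simp add: mult_left_mono)
    also have "\<dots> = rB * (P l * sqrt (T l))" by simp
    also have "\<dots> \<le> rB * (P l * T l / sqrt \<delta> + P l * T l / (2*a) + a/2 * indicator {t. 0 < t \<and> t < \<delta>} (T l))"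
      using sqrt_bound[OF Pl Tl(1) a \<delta>] rB by (simp add: mult_left_mono)
    also have "\<dots> = G l" using l by (simp add: G_def rd_def S_def indicator_def)
    finally show ?thesis .
  qed
  have nb: "cmod (\<integral>l. complex_of_real (P l) * W l \<partial>\<mu>) \<le> integral\<^sup>L \<mu> G"
  proof -
    have "cmod (\<integral>l. complex_of_real (P l) * W l \<partial>\<mu>) \<le> (\<integral>l. cmod (complex_of_real (P l) * W l) \<partial>\<mu>)"
      by (rule integral_norm_bound)
    also have "\<dots> \<le> integral\<^sup>L \<mu> G"
      by (rule integral_mono) (use integrable_norm[OF P(3)] Gi pw in auto)
    finally show ?thesis .
  qed
  have "s * K - s^2 * L \<le> integral\<^sup>L \<mu> G"
    using P(5) nb by linarith
  then have ineq: "s * K - s^2 * L \<le> rB * (s^2*C/rd + s^2*C/(2*a) + a/2 * m)" using GI by simp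
  have e1: "s^2*C/(2*a) = s * (C/(2*\<eta>))" using s \<eta> by (simp add: a_def power2_eq_square field_simps)
  have e2: "a/2*m = s * (\<eta>*m/2)" by (simp add: a_def)
  have e3: "s^2*C/rd = s*(s*C/rd)" by (simp add: power2_eq_square)
  have "s * K - s * (s*L) \<le> s * (rB * (s*C/rd + C/(2*\<eta>) + \<eta>*m/2))"
    using ineq unfolding e1 e2 e3 by (simp add: algebra_simps power2_eq_square)
  then have "s * (K - s*L) \<le> s * (rB * (s*C/rd + C/(2*\<eta>) + \<eta>*m/2))"
    by (simp add: algebra_simps)
  then have "K - s*L \<le> rB * (s*C/rd + C/(2*\<eta>) + \<eta>*m/2)"
    using s mult_le_cancel_left_pos by blast
  then have main: "K \<le> s*L + rB*(s*C/rd) + rB*(C/(2*\<eta>)) + rB*(\<eta>*m/2)" by (simp add: algebra_simps)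
  have b1: "rB*(\<eta>*m/2) \<le> K/8"
  proof -
    have "\<eta>*m \<le> K1/4" using m \<eta> by (simp add: field_simps)
    then have "rB*(\<eta>*m/2) \<le> rB*(K1/8)" using rB by (simp add: mult_left_mono)
    then show ?thesis using rB by (simp add: K1_def)
  qed
  have b2: "s*L + rB*(s*C/rd) \<le> K/4"
  proof -
    have "rB * (s * (L1 + C/rd)) \<le> rB * (K1/4)" using s2 rB by (intro mult_left_mono) auto
    moreover have "rB * (s * (L1 + C/rd)) = s * \<bar>L\<bar> + rB*(s*C/rd)"
      using rB by (simp add: L1_def algebra_simps)
    moreover have "rB * (K1/4) = K/4" using rB by (simp add: K1_def)
    ultimately have "s * \<bar>L\<bar> + rB*(s*C/rd) \<le> K/4" by simp
    moreover have "s*L \<le> s*\<bar>L\<bar>" using s by (simp add: mult_left_mono)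
    ultimately show ?thesis by linarith
  qed
  show False using main b1 b2 eta2 K by linarith
qed

lemma proj_meas_pair:
  assumes n: "u 0 * cnj (u 0) + u 1 * cnj (u 1) = 1"
  shows "proj_meas 2 [proj1 u, 1\<^sub>m 2 - proj1 u]"
proof -
  have P: "proj1 u \<in> carrier_mat 2 2" by (simp add: proj1_def)
  have Pe: "\<And>i j. i < 2 \<Longrightarrow> j < 2 \<Longrightarrow> proj1 u $$ (i,j) = u i * cnj (u j)" by (simp add: proj1_def)
  have hP: "hermitian_mat 2 (proj1 u)" using P by (simp add: hermitian_mat_def Pe)
  have PP: "proj1 u * proj1 u = proj1 u"
  proof (rule eq_matI)
    fix i j assume ij: "i < dim_row (proj1 u)" "j < dim_col (proj1 u)"
    then have ij2: "i < 2" "j < 2" using P by auto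
    have "(proj1 u * proj1 u) $$ (i,j) = u i * cnj (u 0) * (u 0 * cnj (u j)) + u i * cnj (u 1) * (u 1 * cnj (u j))"
      using ij2 P by (simp add: index_mult_mat scalar_prod_def sum2' Pe)
    also have "\<dots> = u i * cnj (u j) * (u 0 * cnj (u 0) + u 1 * cnj (u 1))" by (simp add: algebra_simps)
    also have "\<dots> = proj1 u $$ (i,j)" using n ij2 by (simp add: Pe)
    finally show "(proj1 u * proj1 u) $$ (i,j) = proj1 u $$ (i,j)" .
  qed auto
  have Q: "1\<^sub>m 2 - proj1 u \<in> carrier_mat 2 2" using P by (rule minus_carrier_mat)
  have Qe: "\<And>i j. i < 2 \<Longrightarrow> j < 2 \<Longrightarrow> (1\<^sub>m 2 - proj1 u) $$ (i,j) = (if i = j then 1 else 0) - u i * cnj (u j)"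
    using P by (simp add: Pe)
  have hQ: "hermitian_mat 2 (1\<^sub>m 2 - proj1 u)" using Q by (simp add: hermitian_mat_def Qe)
  have QQ: "(1\<^sub>m 2 - proj1 u) * (1\<^sub>m 2 - proj1 u) = 1\<^sub>m 2 - proj1 u"
  proof (rule eq_matI)
    fix i j assume ij: "i < dim_row (1\<^sub>m 2 - proj1 u)" "j < dim_col (1\<^sub>m 2 - proj1 u)"
    then have ij2: "i < 2" "j < 2" using Q by auto
    define d where "d k l = (if k = l then 1 else (0::complex))" for k l :: nat
    have e: "((1\<^sub>m 2 - proj1 u) * (1\<^sub>m 2 - proj1 u)) $$ (i,j) =
      (d i 0 - u i * cnj (u 0)) * (d 0 j - u 0 * cnj (u j)) + (d i 1 - u i * cnj (u 1)) * (d 1 j - u 1 * cnj (u j))"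
      using ij2 Q by (simp add: index_mult_mat scalar_prod_def sum2' Qe d_def del: index_minus_mat)
    have r: "(d i 0 - u i * cnj (u 0)) * (d 0 j - u 0 * cnj (u j)) + (d i 1 - u i * cnj (u 1)) * (d 1 j - u 1 * cnj (u j))
      = (d i 0 * d 0 j + d i 1 * d 1 j) - (d i 0 * u 0 + d i 1 * u 1) * cnj (u j) - u i * (cnj (u 0) * d 0 j + cnj (u 1) * d 1 j)
        + u i * cnj (u j) * (u 0 * cnj (u 0) + u 1 * cnj (u 1))"
      by (simp add: algebra_simps)
    have c: "i = 0 \<or> i = 1" "j = 0 \<or> j = 1" using ij2 by auto
    have f1: "d i 0 * d 0 j + d i 1 * d 1 j = d i j" using c by (auto simp: d_def)
    have f2: "d i 0 * u 0 + d i 1 * u 1 = u i" using c by (auto simp: d_def)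
    have f3: "cnj (u 0) * d 0 j + cnj (u 1) * d 1 j = cnj (u j)" using c by (auto simp: d_def)
    have "((1\<^sub>m 2 - proj1 u) * (1\<^sub>m 2 - proj1 u)) $$ (i,j) = d i j - u i * cnj (u j)"
      unfolding e r f1 f2 f3 n by simp
    then show "((1\<^sub>m 2 - proj1 u) * (1\<^sub>m 2 - proj1 u)) $$ (i,j) = (1\<^sub>m 2 - proj1 u) $$ (i,j)"
      using ij2 Qe by (simp add: d_def)
  qed auto
  show ?thesis unfolding proj_meas_def
  proof (intro conjI allI impI)
    fix a assume "a < length [proj1 u, 1\<^sub>m 2 - proj1 u]"
    then have "a = 0 \<or> a = 1" by auto
    then show "hermitian_mat 2 ([proj1 u, 1\<^sub>m 2 - proj1 u] ! a)"
      using hP hQ by auto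
  next
    fix a assume "a < length [proj1 u, 1\<^sub>m 2 - proj1 u]"
    then have "a = 0 \<or> a = 1" by auto
    then show "[proj1 u, 1\<^sub>m 2 - proj1 u] ! a * [proj1 u, 1\<^sub>m 2 - proj1 u] ! a = [proj1 u, 1\<^sub>m 2 - proj1 u] ! a"
      using PP QQ by auto
  next
    fix i j :: nat assume ij: "i < 2" "j < 2"
    show "(\<Sum>a<length [proj1 u, 1\<^sub>m 2 - proj1 u]. [proj1 u, 1\<^sub>m 2 - proj1 u] ! a $$ (i, j)) = (if i = j then 1 else 0)"
      using ij by (simp add: sum2 Pe Qe)
  qed
qed

lemma bil_integral:
  fixes \<mu> :: "'l measure" and E :: "'l \<Rightarrow> nat \<Rightarrow> nat \<Rightarrow> complex"
  assumes "\<And>i j. i < 2 \<Longrightarrow> j < 2 \<Longrightarrow> integrable \<mu> (\<lambda>l. E l i j) \<and> S $$ (i,j) = (\<integral>l. E l i j \<partial>\<mu>)"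
  shows "integrable \<mu> (\<lambda>l. \<Sum>a<2. \<Sum>b<2. cnj (f a) * E l a b * g b)"
    and "(\<integral>l. (\<Sum>a<2. \<Sum>b<2. cnj (f a) * E l a b * g b) \<partial>\<mu>) = bilN 2 f S g"
proof -
  have ia: "integrable \<mu> (\<lambda>l. cnj (f a) * E l a b * g b)" if "a \<in> {..<2}" "b \<in> {..<2}" for a b
    using assms[of a b] that by simp
  show "integrable \<mu> (\<lambda>l. \<Sum>a<2. \<Sum>b<2. cnj (f a) * E l a b * g b)"
    using ia by (intro Bochner_Integration.integrable_sum) auto
  have "(\<integral>l. (\<Sum>a<2. \<Sum>b<2. cnj (f a) * E l a b * g b) \<partial>\<mu>) = (\<Sum>a<2. \<integral>l. (\<Sum>b<2. cnj (f a) * E l a b * g b) \<partial>\<mu>)"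
    using ia by (intro Bochner_Integration.integral_sum Bochner_Integration.integrable_sum) auto
  also have "\<dots> = (\<Sum>a<2. \<Sum>b<2. \<integral>l. cnj (f a) * E l a b * g b \<partial>\<mu>)"
    using ia by (intro sum.cong refl Bochner_Integration.integral_sum) auto
  also have "\<dots> = (\<Sum>a<2. \<Sum>b<2. cnj (f a) * S $$ (a,b) * g b)"
  proof (intro sum.cong refl)
    fix a b :: nat assume "a \<in> {..<2}" "b \<in> {..<2}"
    then show "(\<integral>l. cnj (f a) * E l a b * g b \<partial>\<mu>) = cnj (f a) * S $$ (a,b) * g b"
      using assms[of a b] by simp
  qed
  also have "\<dots> = bilN 2 f S g" by (simp add: bilN_def)
  finally show "(\<integral>l. (\<Sum>a<2. \<Sum>b<2. cnj (f a) * E l a b * g b) \<partial>\<mu>) = bilN 2 f S g" .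
qed

lemma cross_bound:
  fixes s :: real and K0 L0 :: complex
  assumes s: "0 < s" "s < 1"
  shows "cmod (complex_of_real s * (complex_of_real (sqrt (1 - s^2)) * K0 + complex_of_real s * L0))
          \<ge> s * cmod K0 - s^2 * (cmod K0 + cmod L0)"
proof -
  define c where "c = sqrt (1 - s^2)"
  have "s * s < 1 * s" using s by (intro mult_strict_right_mono) auto
  then have "s * s < 1" using s by linarith
  then have s2: "s^2 < 1" "0 \<le> 1 - s^2" by (auto simp: power2_eq_square)
  have c1: "1 - s^2 \<le> c"
  proof -
    have "(1 - s^2) * (1 - s^2) \<le> 1 - s^2" using s2 by (simp add: mult_le_one mult_left_le_one_le)
    then have "(1 - s^2)^2 \<le> 1 - s^2" by (simp add: power2_eq_square)
    then show ?thesis unfolding c_def using s2 by (simp add: real_le_rsqrt)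
  qed
  have c0: "c \<ge> 0" using s2 by (simp add: c_def)
  have "cmod (complex_of_real c * K0 + complex_of_real s * L0) \<ge> cmod (complex_of_real c * K0) - cmod (complex_of_real s * L0)"
    by (metis norm_diff_ineq norm_minus_cancel diff_minus_eq_add)
  then have t: "cmod (complex_of_real c * K0 + complex_of_real s * L0) \<ge> c * cmod K0 - s * cmod L0"
    using c0 s by (simp add: norm_mult)
  have "cmod (complex_of_real s * (complex_of_real c * K0 + complex_of_real s * L0)) = s * cmod (complex_of_real c * K0 + complex_of_real s * L0)"
    using s by (simp add: norm_mult)
  also have "\<dots> \<ge> s * (c * cmod K0 - s * cmod L0)" using t s by (simp add: mult_left_mono)
  finally have A: "cmod (complex_of_real s * (complex_of_real c * K0 + complex_of_real s * L0)) \<ge> s * (c * cmod K0 - s * cmod L0)" .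
  have "s * (c * cmod K0) \<ge> s * ((1 - s^2) * cmod K0)" using c1 s by (intro mult_left_mono mult_right_mono) auto
  moreover have "s * ((1 - s^2) * cmod K0) \<ge> s * cmod K0 - s^2 * cmod K0"
  proof -
    have "s^3 \<le> s^2" using s by (simp add: power_decreasing)
    then have "s^3 * cmod K0 \<le> s^2 * cmod K0" by (simp add: mult_right_mono)
    then show ?thesis by (simp add: algebra_simps power2_eq_square power3_eq_cube)
  qed
  ultimately show ?thesis using A unfolding c_def by (simp add: algebra_simps power2_eq_square)
qed

lemma direction:
  fixes \<sigma> :: "complex mat list \<Rightarrow> nat \<Rightarrow> complex mat" and \<mu> :: "'l measure"
  assumes lhs: "LHS_model 2 2 \<sigma> \<mu> \<tau> p"
    and K0: "K0 \<noteq> 0"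
    and ms: "\<And>s. 0 < s \<Longrightarrow> s < 1 \<Longrightarrow> \<exists>M. proj_meas 2 M \<and> length M = 2 \<and>
        bilN 2 x (\<sigma> M 0) x = complex_of_real (s^2) * C \<and>
        bilN 2 y (\<sigma> M 0) x = complex_of_real s * (complex_of_real (sqrt (1 - s^2)) * K0 + complex_of_real s * Lz)"
  shows False
proof -
  have ps: "prob_space \<mu>" and dens: "\<And>l. l \<in> space \<mu> \<Longrightarrow> density_mat 2 (\<tau> l)"
    and entm: "\<And>i j. i < 2 \<Longrightarrow> j < 2 \<Longrightarrow> (\<lambda>l. \<tau> l $$ (i,j)) \<in> borel_measurable \<mu>"
    and resp: "\<And>M. proj_meas 2 M \<Longrightarrow>
        (\<forall>l\<in>space \<mu>. (\<forall>a<length M. p M a l \<ge> 0) \<and> (\<Sum>a<length M. p M a l) = 1) \<and>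
        (\<forall>a<length M. \<forall>i<2. \<forall>j<2.
           integrable \<mu> (\<lambda>l. complex_of_real (p M a l) * \<tau> l $$ (i,j)) \<and>
           \<sigma> M a $$ (i,j) = (\<integral>l. complex_of_real (p M a l) * \<tau> l $$ (i,j) \<partial>\<mu>))"
    using lhs unfolding LHS_model_def by blast+
  define T where "T l = Re (bilN 2 x (\<tau> l) x)" for l
  define W where "W l = bilN 2 y (\<tau> l) x" for l
  define B where "B = (cmod (y 0) + cmod (y 1))^2 + 1"
  have B: "B > 0" unfolding B_def by (simp add: add_nonneg_pos)
  have bm: "(\<lambda>l. bilN 2 x (\<tau> l) x) \<in> borel_measurable \<mu>"
    unfolding bilN_def
    by (intro borel_measurable_sum borel_measurable_times borel_measurable_const) (use entm in auto)
  have Tm: "T \<in> borel_measurable \<mu>"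
    unfolding T_def using measurable_compose[OF bm borel_measurable_Re] by (simp add: o_def)
  have TW: "T l \<ge> 0 \<and> (cmod (W l))^2 \<le> B * T l" if l: "l \<in> space \<mu>" for l
  proof -
    have d: "density_mat 2 (\<tau> l)" using dens l by blast
    then have psd: "psd_mat 2 (\<tau> l)" by (simp add: density_mat_def)
    have T0: "T l \<ge> 0" unfolding T_def by (rule psd_bil[OF psd])
    have "(cmod (W l))^2 \<le> T l * Re (bilN 2 y (\<tau> l) y)" unfolding W_def T_def by (rule psd_cs[OF psd])
    also have "\<dots> \<le> T l * B"
    proof (rule mult_left_mono[OF _ T0])
      show "Re (bilN 2 y (\<tau> l) y) \<le> B" using density_Q_bound[OF d, of y] by (simp add: B_def)
    qed
    finally show ?thesis using T0 by (simp add: mult.commute)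
  qed
  have K: "cmod K0 > 0" using K0 by simp
  show False
  proof (rule core[OF ps Tm TW B K, where C = "Re C" and L = "cmod K0 + cmod Lz"])
    fix s :: real assume s: "0 < s" "s < 1"
    obtain M where M: "proj_meas 2 M" "length M = 2" "bilN 2 x (\<sigma> M 0) x = complex_of_real (s^2) * C"
        "bilN 2 y (\<sigma> M 0) x = complex_of_real s * (complex_of_real (sqrt (1 - s^2)) * K0 + complex_of_real s * Lz)"
      using ms[OF s] by blast
    note R = resp[OF M(1)]
    define P where "P l = p M 0 l" for l
    have P01: "\<forall>l\<in>space \<mu>. 0 \<le> P l \<and> P l \<le> 1"
    proof
      fix l assume l: "l \<in> space \<mu>"
      have "p M 0 l \<ge> 0" "p M 1 l \<ge> 0" "p M 0 l + p M 1 l = 1" using R l M(2) by (auto simp: sum2)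
      then show "0 \<le> P l \<and> P l \<le> 1" by (simp add: P_def)
    qed
    have E: "\<And>i j. i < 2 \<Longrightarrow> j < 2 \<Longrightarrow> integrable \<mu> (\<lambda>l. complex_of_real (P l) * \<tau> l $$ (i,j)) \<and>
        \<sigma> M 0 $$ (i,j) = (\<integral>l. complex_of_real (P l) * \<tau> l $$ (i,j) \<partial>\<mu>)"
      using R M(2) by (auto simp: P_def)
    note BI = bil_integral[where E = "\<lambda>l i j. complex_of_real (P l) * \<tau> l $$ (i,j)", OF E]
    have eqx: "(\<lambda>l. complex_of_real (P l) * bilN 2 f (\<tau> l) g) = (\<lambda>l. \<Sum>a<2. \<Sum>b<2. cnj (f a) * (complex_of_real (P l) * \<tau> l $$ (a,b)) * g b)" for f g
      by (simp add: bilN_def sum2 fun_eq_iff algebra_simps)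
    have ixx: "integrable \<mu> (\<lambda>l. complex_of_real (P l) * bilN 2 x (\<tau> l) x)"
      unfolding eqx by (rule BI(1))
    have Ixx: "(\<integral>l. complex_of_real (P l) * bilN 2 x (\<tau> l) x \<partial>\<mu>) = bilN 2 x (\<sigma> M 0) x"
      unfolding eqx by (rule BI(2))
    have PT: "(\<lambda>l. P l * T l) = (\<lambda>l. Re (complex_of_real (P l) * bilN 2 x (\<tau> l) x))"
      by (simp add: T_def fun_eq_iff)
    have iPT: "integrable \<mu> (\<lambda>l. P l * T l)" unfolding PT using ixx by (rule integrable_Re)
    have IPT: "(\<integral>l. P l * T l \<partial>\<mu>) = s^2 * Re C"
    proof -
      have "(\<integral>l. P l * T l \<partial>\<mu>) = Re (\<integral>l. complex_of_real (P l) * bilN 2 x (\<tau> l) x \<partial>\<mu>)"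
        unfolding PT by (rule integral_Re[OF ixx])
      also have "\<dots> = s^2 * Re C" using Ixx M(3) by simp
      finally show ?thesis .
    qed
    have iW: "integrable \<mu> (\<lambda>l. complex_of_real (P l) * W l)"
      unfolding W_def eqx by (rule BI(1))
    have IW: "(\<integral>l. complex_of_real (P l) * W l \<partial>\<mu>) = bilN 2 y (\<sigma> M 0) x"
      unfolding W_def eqx by (rule BI(2))
    have cb: "cmod (\<integral>l. complex_of_real (P l) * W l \<partial>\<mu>) \<ge> s * cmod K0 - s^2 * (cmod K0 + cmod Lz)"
      unfolding IW M(4) by (rule cross_bound[OF s])
    show "\<exists>P. (\<forall>l\<in>space \<mu>. 0 \<le> P l \<and> P l \<le> 1) \<and>
        integrable \<mu> (\<lambda>l. P l * T l) \<and> integrable \<mu> (\<lambda>l. complex_of_real (P l) * W l) \<and>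
        (\<integral>l. P l * T l \<partial>\<mu>) = s^2 * Re C \<and>
        cmod (\<integral>l. complex_of_real (P l) * W l \<partial>\<mu>) \<ge> s * cmod K0 - s^2 * (cmod K0 + cmod Lz)"
      using P01 iPT iW IPT cb by blast
  qed
qed

lemma Mbeta_comp:
  assumes "\<alpha> \<in> carrier_vec 2" "\<alpha>p \<in> carrier_vec 2" "\<beta> \<in> carrier_vec 2" "\<rho> \<in> carrier_mat 4 4" "j < 2"
  shows "((tensor_mat (bra \<alpha>) (1\<^sub>m 2) * \<rho> * tensor_mat (ket \<alpha>p) (1\<^sub>m 2)) *\<^sub>v \<beta>) $ j
     = bilN 4 (tf (($) \<alpha>) (\<lambda>i. if i = j then 1 else 0)) \<rho> (tf (($) \<alpha>p) (($) \<beta>))"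
proof -
  have "j = 0 \<or> j = 1" using assms(5) by auto
  then show ?thesis using assms
    apply (elim disjE)
     apply (simp_all add: bilN_def tf_def tensor_mat_def bra_def ket_def sum2 sum4 sum2' sum4' scalar_prod_def
     index_mult_mat algebra_simps)
    done
qed

lemma Mbeta_dim:
  assumes "\<alpha> \<in> carrier_vec 2"
  shows "dim_vec ((tensor_mat (bra \<alpha>) (1\<^sub>m 2) * \<rho> * tensor_mat (ket \<alpha>p) (1\<^sub>m 2)) *\<^sub>v \<beta>) = 2"
  using assms by (simp add: tensor_mat_def bra_def)

lemma kernel_sum:
  assumes "\<alpha> \<in> carrier_vec 2" "\<beta> \<in> carrier_vec 2" "\<rho> \<in> carrier_mat 4 4"
    and "\<rho> *\<^sub>v tensor_vec \<alpha> \<beta> = 0\<^sub>v 4" and "a < 4"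
  shows "(\<Sum>b<4. \<rho> $$ (a,b) * tf (($) \<alpha>) (($) \<beta>) b) = 0"
proof -
  have "(\<rho> *\<^sub>v tensor_vec \<alpha> \<beta>) $ a = 0" using assms by simp
  moreover have "(\<rho> *\<^sub>v tensor_vec \<alpha> \<beta>) $ a = (\<Sum>b<4. \<rho> $$ (a,b) * tf (($) \<alpha>) (($) \<beta>) b)"
    using assms(1-3,5) by (simp add: scalar_prod_def tensor_vec_def tf_def sum4 sum4' row_def)
  ultimately show ?thesis by simp
qed

lemma bil_scale_right: "bilN n f R (\<lambda>b. c * g b) = c * bilN n f R g"
  unfolding bilN_def by (simp add: sum_distrib_left algebra_simps)

theorem mainTheorem2:
  fixes \<rho> :: "complex mat" and \<alpha> \<alpha>\<^sub>p \<beta> :: "complex vec"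
  assumes state: "density_mat 4 \<rho>"
    and alpha: "\<alpha> \<in> carrier_vec 2" "\<alpha> \<bullet>c \<alpha> = 1"
    and beta: "\<beta> \<in> carrier_vec 2" "\<beta> \<noteq> 0\<^sub>v 2"
    and kernel: "\<rho> *\<^sub>v tensor_vec \<alpha> \<beta> = 0\<^sub>v 4"
    and alpha_perp: "\<alpha>\<^sub>p \<in> carrier_vec 2" "\<alpha>\<^sub>p \<bullet>c \<alpha>\<^sub>p = 1" "\<alpha>\<^sub>p \<bullet>c \<alpha> = 0"
    and M_beta: "(tensor_mat (bra \<alpha>) (1\<^sub>m 2) * \<rho> * tensor_mat (ket \<alpha>\<^sub>p) (1\<^sub>m 2)) *\<^sub>v \<beta> \<noteq> 0\<^sub>v 2"
  shows "two_way_proj_steerable TYPE('l) \<rho>"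
proof -
  have herm4: "hermitian_mat 4 \<rho>" using state unfolding density_mat_def psd_mat_def by blast
  have rho4: "\<rho> \<in> carrier_mat 4 4" using herm4 unfolding hermitian_mat_def by blast
  define a' where "a' = (($) \<alpha>)"
  define ap where "ap = (($) \<alpha>\<^sub>p)"
  define b' where "b' = (($) \<beta>)"
  have bnz: "b' 0 \<noteq> 0 \<or> b' 1 \<noteq> 0"
  proof (rule ccontr)
    assume "\<not> (b' 0 \<noteq> 0 \<or> b' 1 \<noteq> 0)"
    then have z: "\<beta> $ 0 = 0" "\<beta> $ 1 = 0" by (auto simp: b'_def)
    have "\<beta> = 0\<^sub>v 2"
    proof (rule eq_vecI)
      fix i assume "i < dim_vec (0\<^sub>v 2 :: complex vec)"
      then have "i = 0 \<or> i = 1" by auto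
      then show "\<beta> $ i = 0\<^sub>v 2 $ i" using z by auto
    qed (use beta(1) in simp)
    then show False using beta(2) by simp
  qed
  define nr where "nr = (cmod (b' 0))^2 + (cmod (b' 1))^2"
  have nr: "nr > 0" using bnz unfolding nr_def by (auto simp: add_pos_nonneg add_nonneg_pos)
  define r where "r = sqrt nr"
  have r: "r > 0" "r^2 = nr" using nr by (auto simp: r_def)
  have rc: "complex_of_real r \<noteq> 0" using r by simp
  have nrc: "b' 0 * cnj (b' 0) + b' 1 * cnj (b' 1) = complex_of_real r * complex_of_real r"
  proof -
    have "b' 0 * cnj (b' 0) + b' 1 * cnj (b' 1) = complex_of_real ((cmod (b' 0))^2) + complex_of_real ((cmod (b' 1))^2)"
      by (simp only: complex_norm_square)
    also have "\<dots> = complex_of_real (r^2)" by (simp add: r nr_def)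
    finally show ?thesis by (simp add: power2_eq_square)
  qed
  define b1 where "b1 i = b' i / complex_of_real r" for i :: nat
  define b2 where "b2 i = (if i = 0 then - cnj (b' 1) else cnj (b' 0)) / complex_of_real r" for i :: nat
  have ident: "(if i = j then 1 else 0) = cnj (b1 j) * b1 i + cnj (b2 j) * b2 i" if "i < 2" "j < 2" for i j :: nat
  proof -
    have c: "i = 0 \<or> i = 1" "j = 0 \<or> j = 1" using that by auto
    have e00: "cnj (b1 0) * b1 0 + cnj (b2 0) * b2 0 = 1"
      using nrc rc by (simp add: b1_def b2_def field_simps)
    have e11: "cnj (b1 1) * b1 1 + cnj (b2 1) * b2 1 = 1"
      using nrc rc by (simp add: b1_def b2_def field_simps)
    have e01: "cnj (b1 0) * b1 1 + cnj (b2 0) * b2 1 = 0"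
      using rc by (simp add: b1_def b2_def field_simps)
    have e10: "cnj (b1 1) * b1 0 + cnj (b2 1) * b2 0 = 0"
      using rc by (simp add: b1_def b2_def field_simps)
    show ?thesis using c e00 e11 e01 e10 by auto
  qed
  have ker: "\<And>a. a < 4 \<Longrightarrow> (\<Sum>b<4. \<rho> $$ (a,b) * tf a' b' b) = 0"
    unfolding a'_def b'_def using kernel_sum[OF alpha(1) beta(1) rho4 kernel] by blast
  have tfb1: "tf f b1 = (\<lambda>a. (1 / complex_of_real r) * tf f b' a)" for f
    by (simp add: tf_def b1_def fun_eq_iff)
  have ker1: "\<And>a. a < 4 \<Longrightarrow> (\<Sum>b<4. \<rho> $$ (a,b) * tf a' b1 b) = 0"
  proof -
    fix a :: nat assume a: "a < 4"
    have "(\<Sum>b<4. \<rho> $$ (a,b) * tf a' b1 b) = (1 / complex_of_real r) * (\<Sum>b<4. \<rho> $$ (a,b) * tf a' b' b)"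
      by (simp add: tfb1 sum_distrib_left algebra_simps)
    then show "(\<Sum>b<4. \<rho> $$ (a,b) * tf a' b1 b) = 0" using ker[OF a] by simp
  qed
  have Z0: "\<And>f. bilN 4 f \<rho> (tf a' b') = 0" by (rule bil_kernel) (rule ker)
  have Z1: "\<And>f. bilN 4 f \<rho> (tf a' b1) = 0" by (rule bil_kernel) (rule ker1)
  have Z0': "\<And>g. bilN 4 (tf a' b') \<rho> g = 0" using bil4_herm[OF herm4] Z0 by (metis complex_cnj_zero)
  have Z1': "\<And>g. bilN 4 (tf a' b1) \<rho> g = 0" using bil4_herm[OF herm4] Z1 by (metis complex_cnj_zero)
  define Kst where "Kst = bilN 4 (tf a' b2) \<rho> (tf ap b')"
  have Kst: "Kst \<noteq> 0"
  proof
    assume K0: "Kst = 0"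
    have comp: "((tensor_mat (bra \<alpha>) (1\<^sub>m 2) * \<rho> * tensor_mat (ket \<alpha>\<^sub>p) (1\<^sub>m 2)) *\<^sub>v \<beta>) $ j = 0" if j: "j < 2" for j
    proof -
      have "tf a' (\<lambda>i. if i = j then 1 else 0) = (\<lambda>a. cnj (b1 j) * tf a' b1 a + cnj (b2 j) * tf a' b2 a)"
      proof
        fix a :: nat
        have "a mod 2 < 2" by simp
        then show "tf a' (\<lambda>i. if i = j then 1 else 0) a = cnj (b1 j) * tf a' b1 a + cnj (b2 j) * tf a' b2 a"
          using ident[OF _ j, of "a mod 2"] by (simp add: tf_def algebra_simps)
      qed
      then have "bilN 4 (tf a' (\<lambda>i. if i = j then 1 else 0)) \<rho> (tf ap b') = b1 j * bilN 4 (tf a' b1) \<rho> (tf ap b') + b2 j * Kst"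
        by (simp add: bil_lin_left Kst_def)
      also have "\<dots> = 0" using Z1' K0 by simp
      finally show ?thesis using Mbeta_comp[OF alpha(1) alpha_perp(1) beta(1) rho4 j] by (simp add: a'_def ap_def b'_def)
    qed
    have "(tensor_mat (bra \<alpha>) (1\<^sub>m 2) * \<rho> * tensor_mat (ket \<alpha>\<^sub>p) (1\<^sub>m 2)) *\<^sub>v \<beta> = 0\<^sub>v 2"
    proof (rule eq_vecI)
      fix i assume "i < dim_vec (0\<^sub>v 2 :: complex vec)"
      then have "i < 2" by simp
      then show "((tensor_mat (bra \<alpha>) (1\<^sub>m 2) * \<rho> * tensor_mat (ket \<alpha>\<^sub>p) (1\<^sub>m 2)) *\<^sub>v \<beta>) $ i = 0\<^sub>v 2 $ i"
        using comp by simp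
    next
      show "dim_vec ((tensor_mat (bra \<alpha>) (1\<^sub>m 2) * \<rho> * tensor_mat (ket \<alpha>\<^sub>p) (1\<^sub>m 2)) *\<^sub>v \<beta>) = dim_vec (0\<^sub>v 2 :: complex vec)"
        using alpha(1) by (simp add: tensor_mat_def bra_def)
    qed
    then show False using M_beta by simp
  qed
  have na: "a' 0 * cnj (a' 0) + a' 1 * cnj (a' 1) = 1"
    using alpha by (simp add: a'_def scalar_prod_def sum2')
  have nap: "ap 0 * cnj (ap 0) + ap 1 * cnj (ap 1) = 1"
    using alpha_perp by (simp add: ap_def scalar_prod_def sum2')
  have oa: "ap 0 * cnj (a' 0) + ap 1 * cnj (a' 1) = 0"
    using alpha_perp alpha by (simp add: a'_def ap_def scalar_prod_def sum2')
  have oa': "a' 0 * cnj (ap 0) + a' 1 * cnj (ap 1) = 0"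
  proof -
    have "cnj (ap 0 * cnj (a' 0) + ap 1 * cnj (a' 1)) = 0" using oa by simp
    then show ?thesis by (simp add: algebra_simps)
  qed
  have nb1: "b1 0 * cnj (b1 0) + b1 1 * cnj (b1 1) = 1"
    using nrc rc by (simp add: b1_def field_simps)
  have nb2: "b2 0 * cnj (b2 0) + b2 1 * cnj (b2 1) = 1"
    using nrc rc by (simp add: b2_def field_simps)
  have ob12: "b1 0 * cnj (b2 0) + b1 1 * cnj (b2 1) = 0"
    using rc by (simp add: b1_def b2_def field_simps)
  have ob21: "b2 0 * cnj (b1 0) + b2 1 * cnj (b1 1) = 0"
    using rc by (simp add: b1_def b2_def field_simps)
  have sq: "complex_of_real (sqrt (1 - s^2)) * complex_of_real (sqrt (1 - s^2)) + complex_of_real s * complex_of_real s = 1"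
    if s: "0 < s" "s < 1" for s :: real
  proof -
    have "s * s < 1 * 1" using s by (intro mult_strict_mono) auto
    then have "0 \<le> 1 - s^2" by (simp add: power2_eq_square)
    then have "sqrt (1 - s^2) * sqrt (1 - s^2) + s * s = 1" by (simp add: power2_eq_square)
    then have "complex_of_real (sqrt (1 - s^2) * sqrt (1 - s^2) + s * s) = 1" by simp
    then show ?thesis by (metis of_real_add of_real_mult)
  qed
  have AB: "proj_steerable_AB TYPE('l) \<rho>"
    unfolding proj_steerable_AB_def
  proof
    assume "\<exists>(\<mu>::'l measure) \<tau> p. LHS_model 2 2 (assemblage_AB \<rho>) \<mu> \<tau> p"
    then obtain \<mu> :: "'l measure" and \<tau> p where lhs: "LHS_model 2 2 (assemblage_AB \<rho>) \<mu> \<tau> p" by blast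
    show False
    proof (rule direction[OF lhs Kst, where x = b' and y = b2
        and C = "bilN 4 (tf ap b') \<rho> (tf ap b')" and Lz = "bilN 4 (tf ap b2) \<rho> (tf ap b')"])
      fix s :: real assume s: "0 < s" "s < 1"
      define c where "c = complex_of_real (sqrt (1 - s^2))"
      define sc where "sc = complex_of_real s"
      have cs1: "c * cnj c + sc * cnj sc = 1" using sq[OF s] by (simp add: c_def sc_def)
      define u where "u = (\<lambda>i. c * a' i + sc * ap i)"
      have nu: "u 0 * cnj (u 0) + u 1 * cnj (u 1) = 1"
      proof -
        have "u 0 * cnj (u 0) + u 1 * cnj (u 1) = c * cnj c * (a' 0 * cnj (a' 0) + a' 1 * cnj (a' 1))
           + sc * cnj sc * (ap 0 * cnj (ap 0) + ap 1 * cnj (ap 1))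
           + c * cnj sc * (a' 0 * cnj (ap 0) + a' 1 * cnj (ap 1)) + sc * cnj c * (ap 0 * cnj (a' 0) + ap 1 * cnj (a' 1))"
          by (simp add: u_def algebra_simps)
        also have "\<dots> = 1" using na nap oa oa' cs1 by simp
        finally show ?thesis .
      qed
      define M where "M = [proj1 u, 1\<^sub>m 2 - proj1 u]"
      have PM: "proj_meas 2 M" unfolding M_def by (rule proj_meas_pair[OF nu])
      have sig: "assemblage_AB \<rho> M 0 = ptrace_fst 2 2 (tensor_mat (proj1 u) (1\<^sub>m 2) * \<rho>)"
        by (simp add: assemblage_AB_def M_def)
      have tu: "tf u g = (\<lambda>a. c * tf a' g a + sc * tf ap g a)" for g
        unfolding u_def by (rule tf_lin1)
      have cc: "cnj c = c" "cnj sc = sc" by (simp_all add: c_def sc_def)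
      have e1: "bilN 2 b' (assemblage_AB \<rho> M 0) b' = complex_of_real (s^2) * bilN 4 (tf ap b') \<rho> (tf ap b')"
      proof -
        have "bilN 2 b' (assemblage_AB \<rho> M 0) b' = bilN 4 (tf u b') \<rho> (tf u b')"
          unfolding sig by (rule ptrace_AB_bil[OF rho4])
        also have "\<dots> = sc * bilN 4 (tf u b') \<rho> (tf ap b')"
          unfolding tu[of b'] bil_lin_right Z0 by simp
        also have "\<dots> = sc * (sc * bilN 4 (tf ap b') \<rho> (tf ap b'))"
          unfolding tu[of b'] bil_lin_left Z0' cc by simp
        finally show ?thesis by (simp add: sc_def power2_eq_square)
      qed
      have e2: "bilN 2 b2 (assemblage_AB \<rho> M 0) b' = complex_of_real s * (complex_of_real (sqrt (1 - s^2)) * Kst + complex_of_real s * bilN 4 (tf ap b2) \<rho> (tf ap b'))"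
      proof -
        have "bilN 2 b2 (assemblage_AB \<rho> M 0) b' = bilN 4 (tf u b2) \<rho> (tf u b')"
          unfolding sig by (rule ptrace_AB_bil[OF rho4])
        also have "\<dots> = sc * bilN 4 (tf u b2) \<rho> (tf ap b')"
          unfolding tu[of b'] bil_lin_right Z0 by simp
        also have "\<dots> = sc * (c * Kst + sc * bilN 4 (tf ap b2) \<rho> (tf ap b'))"
          unfolding tu[of b2] bil_lin_left cc Kst_def by simp
        finally show ?thesis by (simp add: sc_def c_def)
      qed
      show "\<exists>M. proj_meas 2 M \<and> length M = 2 \<and>
          bilN 2 b' (assemblage_AB \<rho> M 0) b' = complex_of_real (s^2) * bilN 4 (tf ap b') \<rho> (tf ap b') \<and>
          bilN 2 b2 (assemblage_AB \<rho> M 0) b' = complex_of_real s * (complex_of_real (sqrt (1 - s^2)) * Kst + complex_of_real s * bilN 4 (tf ap b2) \<rho> (tf ap b'))"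
        using PM e1 e2 by (auto simp: M_def)
    qed
  qed
  define K2 where "K2 = bilN 4 (tf ap b1) \<rho> (tf a' b2)"
  have K2: "K2 \<noteq> 0"
  proof -
    have "K2 = cnj (bilN 4 (tf a' b2) \<rho> (tf ap b1))" unfolding K2_def by (rule bil4_herm[OF herm4])
    also have "bilN 4 (tf a' b2) \<rho> (tf ap b1) = (1 / complex_of_real r) * Kst"
      unfolding tfb1 bil_scale_right Kst_def by simp
    finally have "K2 = cnj ((1 / complex_of_real r) * Kst)" .
    then show ?thesis using Kst rc by simp
  qed
  have BA: "proj_steerable_BA TYPE('l) \<rho>"
    unfolding proj_steerable_BA_def
  proof
    assume "\<exists>(\<mu>::'l measure) \<tau> p. LHS_model 2 2 (assemblage_BA \<rho>) \<mu> \<tau> p"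
    then obtain \<mu> :: "'l measure" and \<tau> p where lhs: "LHS_model 2 2 (assemblage_BA \<rho>) \<mu> \<tau> p" by blast
    show False
    proof (rule direction[OF lhs K2, where x = a' and y = ap
        and C = "bilN 4 (tf a' b2) \<rho> (tf a' b2)" and Lz = "bilN 4 (tf ap b2) \<rho> (tf a' b2)"])
      fix s :: real assume s: "0 < s" "s < 1"
      define c where "c = complex_of_real (sqrt (1 - s^2))"
      define sc where "sc = complex_of_real s"
      have cs1: "c * cnj c + sc * cnj sc = 1" using sq[OF s] by (simp add: c_def sc_def)
      define v where "v = (\<lambda>i. c * b1 i + sc * b2 i)"
      have nv: "v 0 * cnj (v 0) + v 1 * cnj (v 1) = 1"
      proof -
        have "v 0 * cnj (v 0) + v 1 * cnj (v 1) = c * cnj c * (b1 0 * cnj (b1 0) + b1 1 * cnj (b1 1))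
           + sc * cnj sc * (b2 0 * cnj (b2 0) + b2 1 * cnj (b2 1))
           + c * cnj sc * (b1 0 * cnj (b2 0) + b1 1 * cnj (b2 1)) + sc * cnj c * (b2 0 * cnj (b1 0) + b2 1 * cnj (b1 1))"
          by (simp add: v_def algebra_simps)
        also have "\<dots> = 1" using nb1 nb2 ob12 ob21 cs1 by simp
        finally show ?thesis .
      qed
      define M where "M = [proj1 v, 1\<^sub>m 2 - proj1 v]"
      have PM: "proj_meas 2 M" unfolding M_def by (rule proj_meas_pair[OF nv])
      have sig: "assemblage_BA \<rho> M 0 = ptrace_snd 2 2 (tensor_mat (1\<^sub>m 2) (proj1 v) * \<rho>)"
        by (simp add: assemblage_BA_def M_def)
      have tv: "tf g v = (\<lambda>a. c * tf g b1 a + sc * tf g b2 a)" for g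
        unfolding v_def by (rule tf_lin2)
      have cc: "cnj c = c" "cnj sc = sc" by (simp_all add: c_def sc_def)
      have e1: "bilN 2 a' (assemblage_BA \<rho> M 0) a' = complex_of_real (s^2) * bilN 4 (tf a' b2) \<rho> (tf a' b2)"
      proof -
        have "bilN 2 a' (assemblage_BA \<rho> M 0) a' = bilN 4 (tf a' v) \<rho> (tf a' v)"
          unfolding sig by (rule ptrace_BA_bil[OF rho4])
        also have "\<dots> = sc * bilN 4 (tf a' v) \<rho> (tf a' b2)"
          unfolding tv[of a'] bil_lin_right Z1 by simp
        also have "\<dots> = sc * (sc * bilN 4 (tf a' b2) \<rho> (tf a' b2))"
          unfolding tv[of a'] bil_lin_left Z1' cc by simp
        finally show ?thesis by (simp add: sc_def power2_eq_square)
      qed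
      have e2: "bilN 2 ap (assemblage_BA \<rho> M 0) a' = complex_of_real s * (complex_of_real (sqrt (1 - s^2)) * K2 + complex_of_real s * bilN 4 (tf ap b2) \<rho> (tf a' b2))"
      proof -
        have "bilN 2 ap (assemblage_BA \<rho> M 0) a' = bilN 4 (tf ap v) \<rho> (tf a' v)"
          unfolding sig by (rule ptrace_BA_bil[OF rho4])
        also have "\<dots> = sc * bilN 4 (tf ap v) \<rho> (tf a' b2)"
          unfolding tv[of a'] bil_lin_right Z1 by simp
        also have "\<dots> = sc * (c * K2 + sc * bilN 4 (tf ap b2) \<rho> (tf a' b2))"
          unfolding tv[of ap] bil_lin_left cc K2_def by simp
        finally show ?thesis by (simp add: sc_def c_def)
      qed
      show "\<exists>M. proj_meas 2 M \<and> length M = 2 \<and>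
          bilN 2 a' (assemblage_BA \<rho> M 0) a' = complex_of_real (s^2) * bilN 4 (tf a' b2) \<rho> (tf a' b2) \<and>
          bilN 2 ap (assemblage_BA \<rho> M 0) a' = complex_of_real s * (complex_of_real (sqrt (1 - s^2)) * K2 + complex_of_real s * bilN 4 (tf ap b2) \<rho> (tf a' b2))"
        using PM e1 e2 by (auto simp: M_def)
    qed
  qed
  show ?thesis unfolding two_way_proj_steerable_def using AB BA by blast
qed


end
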